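(* Let $d_2,d_3\ge 2$, $k\ge 1$ and $d_1=d_2d_3-k\ge 1$, and let $H=\mathbb{C}^{d_1}\otimes\mathbb{C}^{d_2}\otimes\mathbb{C}^{d_3}$. Let $|\Phi\rangle,|\Psi\rangle\in H$ satisfy $\mathrm{rank}(\rho^{A_1}_\Phi)=\mathrm{rank}(\rho^{A_1}_\Psi)=d_1$. Then $|\Phi\rangle$ and $|\Psi\rangle$ are SLOCC equivalent if and only if $\mathcal{T}^{A_1}(\Phi)=\mathcal{T}^{A_1}(\Psi)$.
   Context: The three factors are held by parties $A_1,A_2,A_3$; $\rho^{A_1}_\Phi$ is the reduced density operator of $|\Phi\rangle\langle\Phi|$ on the first factor. Two states in a multipartite space are SLOCC equivalent if one is obtained from the other by applying $L_1\otimes L_2\otimes L_3$ with each $L_i$ an invertible linear operator on the corresponding factor. Definition of $\mathcal{T}^{A_1}$: for $|\Phi\rangle\in H$ with $\mathrm{rank}(\rho^{A_1}_\Phi)=d_1$, write $|\Phi\rangle=\sum_{i=1}^{d_1}|i\rangle^{A_1}|\phi_i\rangle^{A_2A_3}$ for a basis $\{|i\rangle\}$ of $\mathbb{C}^{d_1}$ (so the $|\phi_i\rangle$ are linearly independent and their span has orthogonal complement of dimension $k$ in $\mathbb{C}^{d_2}\otimes\mathbb{C}^{d_3}$). Let $\{|\phi_i^\perp\rangle:1\le i\le k\}$ be any basis of $\mathrm{span}\{|\phi_i\rangle:1\le i\le d_1\}^\perp$. Then $\mathcal{T}^{A_1}(\Phi)$ is the SLOCC equivalence class in $\mathbb{C}^{k}\otimes\mathbb{C}^{d_2}\otimes\mathbb{C}^{d_3}$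 of $\sum_{i=1}^k|i\rangle|\phi_i^\perp\rangle$, where $\{|i\rangle:1\le i\le k\}$ is a basis of $\mathbb{C}^k$; this class does not depend on the choices of bases. *)

theory Defs
  imports "Jordan_Normal_Form.DL_Rank"
begin

type_synonym tensor3 = "nat \<Rightarrow> nat \<Rightarrow> nat \<Rightarrow> complex"
type_synonym tensor2 = "nat \<Rightarrow> nat \<Rightarrow> complex"

text \<open>A vector of C^a (x) C^b (x) C^c, in coordinates w.r.t. the standard product basis;
  entries outside the index range are zero.\<close>
definition in_tensor3 :: "nat \<Rightarrow> nat \<Rightarrow> nat \<Rightarrow> tensor3 \<Rightarrow> bool" where
  "in_tensor3 a b c T \<longleftrightarrow> (\<forall>i j l. \<not> (i < a \<and> j < b \<and> l < c) \<longrightarrow> T i j l = 0)"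

definition in_tensor2 :: "nat \<Rightarrow> nat \<Rightarrow> tensor2 \<Rightarrow> bool" where
  "in_tensor2 b c w \<longleftrightarrow> (\<forall>j l. \<not> (j < b \<and> l < c) \<longrightarrow> w j l = 0)"

definition local_op :: "nat \<Rightarrow> nat \<Rightarrow> nat \<Rightarrow> complex mat \<Rightarrow> complex mat \<Rightarrow> complex mat \<Rightarrow> tensor3 \<Rightarrow> tensor3" where
  "local_op a b c L1 L2 L3 T = (\<lambda>i j l. if i < a \<and> j < b \<and> l < c then
      (\<Sum>i'<a. \<Sum>j'<b. \<Sum>l'<c. L1 $$ (i, i') * L2 $$ (j, j') * L3 $$ (l, l') * T i' j' l')
    else 0)"

definition slocc_equiv :: "nat \<Rightarrow> nat \<Rightarrow> nat \<Rightarrow> tensor3 \<Rightarrow> tensor3 \<Rightarrow> bool" where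
  "slocc_equiv a b c T S \<longleftrightarrow>
     (\<exists>L1 L2 L3. L1 \<in> carrier_mat a a \<and> invertible_mat L1 \<and>
                 L2 \<in> carrier_mat b b \<and> invertible_mat L2 \<and>
                 L3 \<in> carrier_mat c c \<and> invertible_mat L3 \<and>
                 S = local_op a b c L1 L2 L3 T)"

text \<open>Reduced density operator on the first party of |T><T|.\<close>
definition reduced_A1 :: "nat \<Rightarrow> nat \<Rightarrow> nat \<Rightarrow> tensor3 \<Rightarrow> complex mat" where
  "reduced_A1 a b c T = mat a a (\<lambda>(i, i'). \<Sum>j<b. \<Sum>l<c. T i j l * cnj (T i' j l))"

definition rank_rho_A1 :: "nat \<Rightarrow> nat \<Rightarrow> nat \<Rightarrow> tensor3 \<Rightarrow> nat" where
  "rank_rho_A1 a b c T = vec_space.rank a (reduced_A1 a b c T)"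

definition inner2 :: "nat \<Rightarrow> nat \<Rightarrow> tensor2 \<Rightarrow> tensor2 \<Rightarrow> complex" where
  "inner2 b c u v = (\<Sum>j<b. \<Sum>l<c. cnj (u j l) * v j l)"

text \<open>X = sum_{i<k} |i> |X i> where (X i)_{i<k} is a basis of the orthogonal complement of
  span {Phi i : i < a} in C^b (x) C^c (Phi = sum_i |i>|Phi i>).\<close>
definition T_rep :: "nat \<Rightarrow> nat \<Rightarrow> nat \<Rightarrow> nat \<Rightarrow> tensor3 \<Rightarrow> tensor3 \<Rightarrow> bool" where
  "T_rep a b c k Phi X \<longleftrightarrow>
     in_tensor3 k b c X \<and>
     (\<forall>i<k. \<forall>i'<a. inner2 b c (Phi i') (X i) = 0) \<and>
     (\<forall>coef. (\<forall>j<b. \<forall>l<c. (\<Sum>i<k. coef i * X i j l) = 0) \<longrightarrow> (\<forall>i<k. coef i = 0)) \<and>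
     (\<forall>w. in_tensor2 b c w \<and> (\<forall>i'<a. inner2 b c (Phi i') w = 0) \<longrightarrow>
          (\<exists>coef. \<forall>j l. w j l = (\<Sum>i<k. coef i * X i j l)))"

definition T_A1 :: "nat \<Rightarrow> nat \<Rightarrow> nat \<Rightarrow> nat \<Rightarrow> tensor3 \<Rightarrow> tensor3 set" where
  "T_A1 a b c k Phi = {Y. \<exists>X. T_rep a b c k Phi X \<and> slocc_equiv k b c X Y}"

end

theory Submission
  imports Defs
begin

definition dl :: "nat \<Rightarrow> nat \<Rightarrow> complex" where "dl i j = (if i = j then 1 else 0)"

definition mm :: "nat \<Rightarrow> (nat\<Rightarrow>nat\<Rightarrow>complex) \<Rightarrow> (nat\<Rightarrow>nat\<Rightarrow>complex) \<Rightarrow> nat\<Rightarrow>nat\<Rightarrow>complex" where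
  "mm n g f = (\<lambda>i k. \<Sum>m<n. g i m * f m k)"

definition adjf :: "(nat\<Rightarrow>nat\<Rightarrow>complex) \<Rightarrow> nat\<Rightarrow>nat\<Rightarrow>complex" where
  "adjf f = (\<lambda>i j. cnj (f j i))"

definition lopf :: "nat\<Rightarrow>nat\<Rightarrow>nat\<Rightarrow>(nat\<Rightarrow>nat\<Rightarrow>complex)\<Rightarrow>(nat\<Rightarrow>nat\<Rightarrow>complex)\<Rightarrow>(nat\<Rightarrow>nat\<Rightarrow>complex)\<Rightarrow>tensor3\<Rightarrow>tensor3" where
 "lopf a b c f1 f2 f3 T = (\<lambda>i j l. if i<a \<and> j<b \<and> l<c then
     (\<Sum>i'<a. \<Sum>j'<b. \<Sum>l'<c. f1 i i' * f2 j j' * f3 l l' * T i' j' l') else 0)"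

definition op2f :: "nat\<Rightarrow>nat\<Rightarrow>(nat\<Rightarrow>nat\<Rightarrow>complex)\<Rightarrow>(nat\<Rightarrow>nat\<Rightarrow>complex)\<Rightarrow>tensor2\<Rightarrow>tensor2" where
 "op2f b c f2 f3 w = (\<lambda>j l. if j<b \<and> l<c then
     (\<Sum>j'<b. \<Sum>l'<c. f2 j j' * f3 l l' * w j' l') else 0)"

lemma local_op_lopf: "local_op a b c L1 L2 L3 T =
   lopf a b c (\<lambda>i j. L1 $$ (i,j)) (\<lambda>i j. L2 $$ (i,j)) (\<lambda>i j. L3 $$ (i,j)) T"
  unfolding local_op_def lopf_def by simp

lemma trip_cart: "(\<Sum>i<a. \<Sum>j<b. \<Sum>l<c. F i j l) = (\<Sum>(i,j,l)\<in>{..<a}\<times>{..<b}\<times>{..<c}. F i j l)"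
  by (simp add: sum.cartesian_product)

lemma fold3: "(\<Sum>i\<in>A. \<Sum>j\<in>B. \<Sum>l\<in>C. (p i::complex) * (q j * (r l * t))) = (\<Sum>i\<in>A. p i) * ((\<Sum>j\<in>B. q j) * ((\<Sum>l\<in>C. r l) * t))"
proof -
  have "(\<Sum>i\<in>A. \<Sum>j\<in>B. \<Sum>l\<in>C. p i * (q j * (r l * t))) = (\<Sum>i\<in>A. p i * (\<Sum>j\<in>B. q j * (\<Sum>l\<in>C. r l * t)))"
    by (simp add: sum_distrib_left)
  also have "\<dots> = (\<Sum>i\<in>A. p i) * ((\<Sum>j\<in>B. q j) * ((\<Sum>l\<in>C. r l) * t))"
    by (simp add: sum_distrib_right)
  finally show ?thesis .
qed

lemma lopf_comp: "lopf a b c g1 g2 g3 (lopf a b c f1 f2 f3 T) = lopf a b c (mm a g1 f1) (mm b g2 f2) (mm c g3 f3) T"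
proof (intro ext)
  fix i j l
  let ?S = "{..<a}\<times>{..<b}\<times>{..<c}"
  define G where "G x = g1 i (fst x) * g2 j (fst (snd x)) * g3 l (snd (snd x))" for x :: "nat\<times>nat\<times>nat"
  define H where "H x y = f1 (fst x) (fst y) * f2 (fst (snd x)) (fst (snd y)) * f3 (snd (snd x)) (snd (snd y))" for x y :: "nat\<times>nat\<times>nat"
  define Tt where "Tt y = T (fst y) (fst (snd y)) (snd (snd y))" for y :: "nat\<times>nat\<times>nat"
  show "lopf a b c g1 g2 g3 (lopf a b c f1 f2 f3 T) i j l = lopf a b c (mm a g1 f1) (mm b g2 f2) (mm c g3 f3) T i j l"
  proof (cases "i<a \<and> j<b \<and> l<c")
    case True
    have "lopf a b c g1 g2 g3 (lopf a b c f1 f2 f3 T) i j l = (\<Sum>x\<in>?S. G x * (\<Sum>y\<in>?S. H x y * Tt y))"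
      using True unfolding lopf_def trip_cart G_def H_def Tt_def by (simp add: case_prod_beta prod.case_eq_if, intro sum.cong refl) (auto simp: prod.case_eq_if)
    also have "\<dots> = (\<Sum>x\<in>?S. \<Sum>y\<in>?S. G x * (H x y * Tt y))"
      by (simp add: sum_distrib_left)
    also have "\<dots> = (\<Sum>y\<in>?S. \<Sum>x\<in>?S. G x * (H x y * Tt y))"
      by (rule sum.swap)
    also have "\<dots> = (\<Sum>y\<in>?S. mm a g1 f1 i (fst y) * mm b g2 f2 j (fst (snd y)) * mm c g3 f3 l (snd (snd y)) * Tt y)"
    proof (intro sum.cong refl)
      fix y :: "nat\<times>nat\<times>nat"
      obtain i'' j'' l'' where y: "y = (i'',j'',l'')" by (cases y) auto
      have "(\<Sum>x\<in>?S. G x * (H x y * Tt y))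
          = (\<Sum>(i',j',l')\<in>?S. (g1 i i' * f1 i' i'') * ((g2 j j' * f2 j' j'') * ((g3 l l' * f3 l' l'') * Tt y)))"
        unfolding G_def H_def y by (intro sum.cong refl) (auto simp: algebra_simps)
      also have "\<dots> = (\<Sum>i'<a. \<Sum>j'<b. \<Sum>l'<c. (g1 i i' * f1 i' i'') * ((g2 j j' * f2 j' j'') * ((g3 l l' * f3 l' l'') * Tt y)))"
        unfolding trip_cart ..
      also have "\<dots> = mm a g1 f1 i i'' * (mm b g2 f2 j j'' * (mm c g3 f3 l l'' * Tt y))"
        unfolding mm_def by (rule fold3)
      finally show "(\<Sum>x\<in>?S. G x * (H x y * Tt y))
         = mm a g1 f1 i (fst y) * mm b g2 f2 j (fst (snd y)) * mm c g3 f3 l (snd (snd y)) * Tt y" by (simp add: mult.assoc y)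
    qed
    also have "\<dots> = lopf a b c (mm a g1 f1) (mm b g2 f2) (mm c g3 f3) T i j l"
      using True unfolding lopf_def trip_cart Tt_def by (simp add: case_prod_beta)
    finally show ?thesis .
  qed (auto simp: lopf_def)
qed

lemma lopf_cong:
  assumes "\<And>i i'. i<a \<Longrightarrow> i'<a \<Longrightarrow> f1 i i' = g1 i i'"
    "\<And>i i'. i<b \<Longrightarrow> i'<b \<Longrightarrow> f2 i i' = g2 i i'"
    "\<And>i i'. i<c \<Longrightarrow> i'<c \<Longrightarrow> f3 i i' = g3 i i'"
  shows "lopf a b c f1 f2 f3 T = lopf a b c g1 g2 g3 T"
  unfolding lopf_def using assms by (intro ext) (auto intro!: sum.cong)

lemma sum_dl: "j \<in> A \<Longrightarrow> finite A \<Longrightarrow> (\<Sum>i\<in>A. dl j i * f i) = f j"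
  by (simp add: dl_def if_distrib[of "\<lambda>x. x * _"] cong: if_cong)

lemma dl_mult: "dl i j * x = (if j = i then x else 0)"
  by (simp add: dl_def)

lemma sum_if_const: "(\<Sum>x\<in>A. if P then f x else 0) = (if P then sum f A else 0)"
  by auto

lemma sum_dl': "j \<in> A \<Longrightarrow> finite A \<Longrightarrow> (\<Sum>i\<in>A. f i * dl i j) = f j"
proof -
  assume "j \<in> A" "finite A"
  have "(\<Sum>i\<in>A. f i * dl i j) = (\<Sum>i\<in>A. dl j i * f i)" by (intro sum.cong) (auto simp: dl_def)
  then show ?thesis using sum_dl[OF \<open>j \<in> A\<close> \<open>finite A\<close>] by simp
qed

lemma sum_dl3: "l \<in> A \<Longrightarrow> finite A \<Longrightarrow> (\<Sum>l'\<in>A. x * dl l l' * f l') = x * f l"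
proof -
  assume "l \<in> A" "finite A"
  have "(\<Sum>l'\<in>A. x * dl l l' * f l') = x * (\<Sum>l'\<in>A. dl l l' * f l')" by (simp add: sum_distrib_left mult.assoc)
  then show ?thesis using sum_dl[OF \<open>l \<in> A\<close> \<open>finite A\<close>] by simp
qed

lemma lopf_id: "in_tensor3 a b c T \<Longrightarrow> lopf a b c dl dl dl T = T"
  unfolding lopf_def in_tensor3_def
  by (intro ext) (auto simp: sum_dl3 sum_dl)

lemma lopf_in: "in_tensor3 a b c (lopf a b c f1 f2 f3 T)"
  unfolding lopf_def in_tensor3_def by auto

lemma op2f_in: "in_tensor2 b c (op2f b c f2 f3 w)"
  unfolding op2f_def in_tensor2_def by auto

lemma lopf_slice: "i<a \<Longrightarrow> lopf a b c f1 f2 f3 T i j l = (\<Sum>i'<a. f1 i i' * op2f b c f2 f3 (T i') j l)"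
  unfolding lopf_def op2f_def by (auto simp: sum_distrib_left mult.assoc)

lemma op2f_cong:
  assumes "\<And>i i'. i<b \<Longrightarrow> i'<b \<Longrightarrow> f2 i i' = g2 i i'"
    "\<And>i i'. i<c \<Longrightarrow> i'<c \<Longrightarrow> f3 i i' = g3 i i'"
  shows "op2f b c f2 f3 w = op2f b c g2 g3 w"
  unfolding op2f_def using assms by (intro ext) (auto intro!: sum.cong)

lemma op2f_id: "in_tensor2 b c w \<Longrightarrow> op2f b c dl dl w = w"
  unfolding op2f_def in_tensor2_def
  by (intro ext) (auto simp: sum_dl3 sum_dl)

lemma dbl_cart: "(\<Sum>j<b. \<Sum>l<c. F j l) = (\<Sum>(j,l)\<in>{..<b}\<times>{..<c}. F j l)"
  by (simp add: sum.cartesian_product)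

lemma fold2: "(\<Sum>j\<in>B. \<Sum>l\<in>C. (q j::complex) * (r l * t)) = (\<Sum>j\<in>B. q j) * ((\<Sum>l\<in>C. r l) * t)"
proof -
  have "(\<Sum>j\<in>B. \<Sum>l\<in>C. q j * (r l * t)) = (\<Sum>j\<in>B. q j * (\<Sum>l\<in>C. r l * t))"
    by (simp add: sum_distrib_left)
  also have "\<dots> = (\<Sum>j\<in>B. q j) * ((\<Sum>l\<in>C. r l) * t)"
    by (simp add: sum_distrib_right)
  finally show ?thesis .
qed

lemma op2f_comp: "op2f b c g2 g3 (op2f b c f2 f3 w) = op2f b c (mm b g2 f2) (mm c g3 f3) w"
proof (intro ext)
  fix j l
  let ?S = "{..<b}\<times>{..<c}"
  show "op2f b c g2 g3 (op2f b c f2 f3 w) j l = op2f b c (mm b g2 f2) (mm c g3 f3) w j l"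
  proof (cases "j<b \<and> l<c")
    case True
    have "op2f b c g2 g3 (op2f b c f2 f3 w) j l = (\<Sum>x\<in>?S. (g2 j (fst x) * g3 l (snd x)) * (\<Sum>y\<in>?S. (f2 (fst x) (fst y) * f3 (snd x) (snd y)) * w (fst y) (snd y)))"
      using True unfolding op2f_def dbl_cart by (simp add: case_prod_beta prod.case_eq_if, intro sum.cong refl) (auto simp: prod.case_eq_if)
    also have "\<dots> = (\<Sum>x\<in>?S. \<Sum>y\<in>?S. (g2 j (fst x) * g3 l (snd x)) * ((f2 (fst x) (fst y) * f3 (snd x) (snd y)) * w (fst y) (snd y)))"
      by (simp add: sum_distrib_left)
    also have "\<dots> = (\<Sum>y\<in>?S. \<Sum>x\<in>?S. (g2 j (fst x) * g3 l (snd x)) * ((f2 (fst x) (fst y) * f3 (snd x) (snd y)) * w (fst y) (snd y)))"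
      by (rule sum.swap)
    also have "\<dots> = (\<Sum>y\<in>?S. mm b g2 f2 j (fst y) * mm c g3 f3 l (snd y) * w (fst y) (snd y))"
    proof (intro sum.cong refl)
      fix y :: "nat\<times>nat"
      obtain j'' l'' where y: "y = (j'',l'')" by (cases y) auto
      have "(\<Sum>x\<in>?S. (g2 j (fst x) * g3 l (snd x)) * ((f2 (fst x) (fst y) * f3 (snd x) (snd y)) * w (fst y) (snd y)))
          = (\<Sum>(j',l')\<in>?S. (g2 j j' * f2 j' j'') * ((g3 l l' * f3 l' l'') * w j'' l''))"
        unfolding y by (intro sum.cong refl) (auto simp: algebra_simps)
      also have "\<dots> = (\<Sum>j'<b. \<Sum>l'<c. (g2 j j' * f2 j' j'') * ((g3 l l' * f3 l' l'') * w j'' l''))"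
        unfolding dbl_cart ..
      also have "\<dots> = mm b g2 f2 j j'' * (mm c g3 f3 l l'' * w j'' l'')"
        unfolding mm_def by (rule fold2)
      finally show "(\<Sum>x\<in>?S. (g2 j (fst x) * g3 l (snd x)) * ((f2 (fst x) (fst y) * f3 (snd x) (snd y)) * w (fst y) (snd y)))
         = mm b g2 f2 j (fst y) * mm c g3 f3 l (snd y) * w (fst y) (snd y)" by (simp add: mult.assoc y)
    qed
    also have "\<dots> = op2f b c (mm b g2 f2) (mm c g3 f3) w j l"
      using True unfolding op2f_def dbl_cart by (simp add: case_prod_beta)
    finally show ?thesis .
  qed (auto simp: op2f_def)
qed

lemma tri_swap: "(\<Sum>j\<in>B. \<Sum>l\<in>C. \<Sum>i\<in>I. F i j l) = (\<Sum>i\<in>I. \<Sum>j\<in>B. \<Sum>l\<in>C. F i j l)"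
proof -
  have "(\<Sum>j\<in>B. \<Sum>l\<in>C. \<Sum>i\<in>I. F i j l) = (\<Sum>j\<in>B. \<Sum>i\<in>I. \<Sum>l\<in>C. F i j l)"
    by (rule sum.cong[OF refl], rule sum.swap)
  also have "\<dots> = (\<Sum>i\<in>I. \<Sum>j\<in>B. \<Sum>l\<in>C. F i j l)" by (rule sum.swap)
  finally show ?thesis .
qed

lemma quad: "(\<Sum>j<b. \<Sum>l<c. \<Sum>j'<b'. \<Sum>l'<c'. F j l j' l') = (\<Sum>j'<b'. \<Sum>l'<c'. \<Sum>j<b. \<Sum>l<c. F j l j' l')"
proof -
  have 1: "\<And>G. (\<Sum>j<b. \<Sum>l<c. G j l) = (\<Sum>x\<in>{..<b}\<times>{..<c}. G (fst x) (snd x))"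
    by (simp add: sum.cartesian_product case_prod_beta)
  have 2: "\<And>G. (\<Sum>j<b'. \<Sum>l<c'. G j l) = (\<Sum>x\<in>{..<b'}\<times>{..<c'}. G (fst x) (snd x))"
    by (simp add: sum.cartesian_product case_prod_beta)
  have "(\<Sum>j<b. \<Sum>l<c. \<Sum>j'<b'. \<Sum>l'<c'. F j l j' l') = (\<Sum>x\<in>{..<b}\<times>{..<c}. \<Sum>y\<in>{..<b'}\<times>{..<c'}. F (fst x) (snd x) (fst y) (snd y))"
    by (simp only: 1 2)
  also have "\<dots> = (\<Sum>y\<in>{..<b'}\<times>{..<c'}. \<Sum>x\<in>{..<b}\<times>{..<c}. F (fst x) (snd x) (fst y) (snd y))"
    by (rule sum.swap)
  also have "\<dots> = (\<Sum>j'<b'. \<Sum>l'<c'. \<Sum>j<b. \<Sum>l<c. F j l j' l')"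
    by (simp only: 1 2)
  finally show ?thesis .
qed

lemma op2f_lin: "op2f b c f2 f3 (\<lambda>j l. \<Sum>i\<in>I. co i * w i j l) j l = (\<Sum>i\<in>I. co i * op2f b c f2 f3 (w i) j l)"
proof (cases "j<b \<and> l<c")
  case True
  have "op2f b c f2 f3 (\<lambda>j l. \<Sum>i\<in>I. co i * w i j l) j l = (\<Sum>j'<b. \<Sum>l'<c. \<Sum>i\<in>I. co i * (f2 j j' * f3 l l' * w i j' l'))"
    using True unfolding op2f_def by (simp add: sum_distrib_left algebra_simps)
  also have "\<dots> = (\<Sum>i\<in>I. \<Sum>j'<b. \<Sum>l'<c. co i * (f2 j j' * f3 l l' * w i j' l'))"
    by (rule tri_swap)
  also have "\<dots> = (\<Sum>i\<in>I. co i * op2f b c f2 f3 (w i) j l)"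
    using True unfolding op2f_def by (simp add: sum_distrib_left)
  finally show ?thesis .
qed (auto simp add: op2f_def)

lemma inner2_cnj: "inner2 b c u v = cnj (inner2 b c v u)"
  unfolding inner2_def by (simp add: mult.commute)

lemma inner2_lin2: "inner2 b c u (\<lambda>j l. \<Sum>i\<in>I. co i * v i j l) = (\<Sum>i\<in>I. co i * inner2 b c u (v i))"
proof -
  have "inner2 b c u (\<lambda>j l. \<Sum>i\<in>I. co i * v i j l) = (\<Sum>j<b. \<Sum>l<c. \<Sum>i\<in>I. co i * (cnj (u j l) * v i j l))"
    unfolding inner2_def by (simp add: sum_distrib_left mult.left_commute)
  also have "\<dots> = (\<Sum>i\<in>I. \<Sum>j<b. \<Sum>l<c. co i * (cnj (u j l) * v i j l))" by (rule tri_swap)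
  also have "\<dots> = (\<Sum>i\<in>I. co i * inner2 b c u (v i))"
    unfolding inner2_def by (simp add: sum_distrib_left)
  finally show ?thesis .
qed

lemma inner2_lin1: "inner2 b c (\<lambda>j l. \<Sum>i\<in>I. co i * v i j l) u = (\<Sum>i\<in>I. cnj (co i) * inner2 b c (v i) u)"
  by (subst inner2_cnj, simp add: inner2_lin2, subst inner2_cnj, simp)

lemma inner2_adj: "inner2 b c (op2f b c f2 f3 u) v = inner2 b c u (op2f b c (adjf f2) (adjf f3) v)"
proof -
  have "inner2 b c (op2f b c f2 f3 u) v = (\<Sum>j<b. \<Sum>l<c. \<Sum>j'<b. \<Sum>l'<c. cnj (u j' l') * (cnj (f2 j j') * cnj (f3 l l') * v j l))"
    unfolding inner2_def op2f_def by (simp add: sum_distrib_left sum_distrib_right algebra_simps)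
  also have "\<dots> = (\<Sum>j'<b. \<Sum>l'<c. \<Sum>j<b. \<Sum>l<c. cnj (u j' l') * (cnj (f2 j j') * cnj (f3 l l') * v j l))"
    by (rule quad)
  also have "\<dots> = inner2 b c u (op2f b c (adjf f2) (adjf f3) v)"
    unfolding inner2_def op2f_def adjf_def by (simp add: sum_distrib_left)
  finally show ?thesis .
qed

definition isinvf :: "nat \<Rightarrow> (nat\<Rightarrow>nat\<Rightarrow>complex) \<Rightarrow> (nat\<Rightarrow>nat\<Rightarrow>complex) \<Rightarrow> bool" where
  "isinvf n f g \<longleftrightarrow> (\<forall>i<n. \<forall>j<n. mm n f g i j = dl i j \<and> mm n g f i j = dl i j)"

definition ent :: "complex mat \<Rightarrow> nat \<Rightarrow> nat \<Rightarrow> complex" where "ent L = (\<lambda>i j. L $$ (i,j))"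

lemma mult_ent: "A \<in> carrier_mat n n \<Longrightarrow> B \<in> carrier_mat n n \<Longrightarrow> i<n \<Longrightarrow> j<n \<Longrightarrow> (A*B) $$ (i,j) = mm n (ent A) (ent B) i j"
  by (simp add: mm_def ent_def scalar_prod_def atLeast0LessThan)

lemma one_ent: "i<n \<Longrightarrow> j<n \<Longrightarrow> (1\<^sub>m n :: complex mat) $$ (i,j) = dl i j"
  by (simp add: dl_def)

lemma inv_ex: assumes L: "L \<in> carrier_mat n n" and inv: "invertible_mat L"
  shows "\<exists>Li. Li \<in> carrier_mat n n \<and> isinvf n (ent L) (ent Li)"
proof -
  obtain P' where PP': "inverts_mat L P'" and P'P: "inverts_mat P' L"
    using inv L unfolding invertible_mat_def by blast
  have P': "P' \<in> carrier_mat n n" using PP' P'P L unfolding inverts_mat_def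
    by (metis carrier_matD(1) carrier_matD(2) carrier_mat_triv index_mult_mat(3) index_one_mat(3))
  have 1: "L * P' = 1\<^sub>m n" "P' * L = 1\<^sub>m n" using PP' P'P L P' unfolding inverts_mat_def by auto
  show ?thesis
  proof (intro exI conjI)
    show "isinvf n (ent L) (ent P')" unfolding isinvf_def
    proof (intro allI impI conjI)
      fix i j assume ij: "i<n" "j<n"
      show "mm n (ent L) (ent P') i j = dl i j" using mult_ent[OF L P' ij] 1 one_ent[OF ij] by simp
      show "mm n (ent P') (ent L) i j = dl i j" using mult_ent[OF P' L ij] 1 one_ent[OF ij] by simp
    qed
  qed (rule P')
qed

lemma right_inv_isinvf: assumes "\<And>i j. i<n \<Longrightarrow> j<n \<Longrightarrow> mm n f g i j = dl i j"
  shows "isinvf n f g"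
proof -
  define A where "A = (mat n n (\<lambda>(i,j). f i j) :: complex mat)"
  define B where "B = (mat n n (\<lambda>(i,j). g i j) :: complex mat)"
  have A: "A \<in> carrier_mat n n" and B: "B \<in> carrier_mat n n" unfolding A_def B_def by auto
  have eA: "ent A i j = f i j" if "i<n" "j<n" for i j using that unfolding A_def ent_def by simp
  have eB: "ent B i j = g i j" if "i<n" "j<n" for i j using that unfolding B_def ent_def by simp
  have mmA: "mm n (ent A) (ent B) i j = mm n f g i j" if "i<n" "j<n" for i j
    unfolding mm_def using that eA eB by (intro sum.cong) auto
  have mmB: "mm n (ent B) (ent A) i j = mm n g f i j" if "i<n" "j<n" for i j
    unfolding mm_def using that eA eB by (intro sum.cong) auto
  have AB: "A * B = 1\<^sub>m n"
    by (rule eq_matI) (use A B in \<open>auto simp del: index_mult_mat simp: index_mult_mat(2,3) mult_ent mmA assms one_ent dl_def\<close>)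
  have BA: "B * A = 1\<^sub>m n" by (rule mat_mult_left_right_inverse[OF A B AB])
  show ?thesis unfolding isinvf_def
  proof (intro allI impI conjI)
    fix i j assume ij: "i<n" "j<n"
    show "mm n f g i j = dl i j" using assms ij by simp
    have "(B*A) $$ (i,j) = dl i j" using BA ij by (simp add: dl_def)
    then show "mm n g f i j = dl i j" using mult_ent[OF B A ij] mmB[OF ij] by simp
  qed
qed

lemma isinvf_mat: assumes "isinvf n f g"
  shows "\<exists>L. L \<in> carrier_mat n n \<and> invertible_mat L \<and> (\<forall>i<n. \<forall>j<n. L $$ (i,j) = f i j)"
proof -
  define A where "A = (mat n n (\<lambda>(i,j). f i j) :: complex mat)"
  define B where "B = (mat n n (\<lambda>(i,j). g i j) :: complex mat)"
  have A: "A \<in> carrier_mat n n" and B: "B \<in> carrier_mat n n" unfolding A_def B_def by auto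
  have eA: "ent A i j = f i j" if "i<n" "j<n" for i j using that unfolding A_def ent_def by simp
  have eB: "ent B i j = g i j" if "i<n" "j<n" for i j using that unfolding B_def ent_def by simp
  have mmA: "mm n (ent A) (ent B) i j = mm n f g i j" if "i<n" "j<n" for i j
    unfolding mm_def using that eA eB by (intro sum.cong) auto
  have mmB: "mm n (ent B) (ent A) i j = mm n g f i j" if "i<n" "j<n" for i j
    unfolding mm_def using that eA eB by (intro sum.cong) auto
  have AB: "A * B = 1\<^sub>m n"
    by (rule eq_matI) (use A B assms in \<open>auto simp del: index_mult_mat simp: index_mult_mat(2,3) mult_ent mmA isinvf_def one_ent dl_def\<close>)
  have BA: "B * A = 1\<^sub>m n"
    by (rule eq_matI) (use A B assms in \<open>auto simp del: index_mult_mat simp: index_mult_mat(2,3) mult_ent mmB isinvf_def one_ent dl_def\<close>)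
  have "invertible_mat A" unfolding invertible_mat_def inverts_mat_def
    using A B AB BA by (intro conjI exI[of _ B]) auto
  then show ?thesis using A eA unfolding ent_def by blast
qed

lemma mm_assoc: "mm n (mm n f g) h i j = mm n f (mm n g h) i j"
proof -
  have "mm n (mm n f g) h i j = (\<Sum>m<n. \<Sum>m'<n. f i m' * (g m' m * h m j))"
    unfolding mm_def by (simp add: sum_distrib_right mult.assoc)
  also have "\<dots> = (\<Sum>m'<n. \<Sum>m<n. f i m' * (g m' m * h m j))" by (rule sum.swap)
  also have "\<dots> = mm n f (mm n g h) i j"
    unfolding mm_def by (simp add: sum_distrib_left)
  finally show ?thesis .
qed

lemma mm_cong: "(\<And>m. m<n \<Longrightarrow> f i m = f' i m) \<Longrightarrow> (\<And>m. m<n \<Longrightarrow> g m j = g' m j) \<Longrightarrow> mm n f g i j = mm n f' g' i j"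
  unfolding mm_def by (intro sum.cong) auto

lemma mm_dl_left: "i<n \<Longrightarrow> mm n dl f i j = f i j"
  unfolding mm_def by (simp add: sum_dl)

lemma mm_dl_right: "j<n \<Longrightarrow> mm n f dl i j = f i j"
  unfolding mm_def by (simp add: sum_dl mult.commute dl_def[of j] dl_def[of _ j] sum_if_const[symmetric] if_distrib cong: if_cong) 

lemma isinvf_dl: "isinvf n dl dl"
  unfolding isinvf_def by (simp add: mm_dl_left)

lemma isinvf_sym: "isinvf n f g \<Longrightarrow> isinvf n g f"
  unfolding isinvf_def by auto

lemma isinvf_adj: assumes "isinvf n f g" shows "isinvf n (adjf g) (adjf f)"
  unfolding isinvf_def
proof (intro allI impI conjI)
  fix i j assume ij: "i<n" "j<n"
  have "mm n (adjf g) (adjf f) i j = cnj (mm n f g j i)"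
    unfolding mm_def adjf_def by (simp add: mult.commute)
  then show "mm n (adjf g) (adjf f) i j = dl i j" using assms ij unfolding isinvf_def by (auto simp: dl_def)
  have "mm n (adjf f) (adjf g) i j = cnj (mm n g f j i)"
    unfolding mm_def adjf_def by (simp add: mult.commute)
  then show "mm n (adjf f) (adjf g) i j = dl i j" using assms ij unfolding isinvf_def by (auto simp: dl_def)
qed

lemma isinvf_mm: assumes "isinvf n f g" "isinvf n f' g'" shows "isinvf n (mm n f f') (mm n g' g)"
  unfolding isinvf_def
proof (intro allI impI conjI)
  fix i j assume ij: "i<n" "j<n"
  have "mm n (mm n f f') (mm n g' g) i j = mm n f (mm n f' (mm n g' g)) i j" by (rule mm_assoc)
  also have "\<dots> = mm n f (mm n (mm n f' g') g) i j" by (rule mm_cong, simp, simp add: mm_assoc)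
  also have "\<dots> = mm n f (mm n dl g) i j" by (rule mm_cong, simp, rule mm_cong, use assms(2) ij in \<open>auto simp: isinvf_def\<close>)
  also have "\<dots> = mm n f g i j" by (rule mm_cong, simp, simp add: mm_dl_left)
  also have "\<dots> = dl i j" using assms(1) ij by (simp add: isinvf_def)
  finally show "mm n (mm n f f') (mm n g' g) i j = dl i j" .
  have "mm n (mm n g' g) (mm n f f') i j = mm n g' (mm n g (mm n f f')) i j" by (rule mm_assoc)
  also have "\<dots> = mm n g' (mm n (mm n g f) f') i j" by (rule mm_cong, simp, simp add: mm_assoc)
  also have "\<dots> = mm n g' (mm n dl f') i j" by (rule mm_cong, simp, rule mm_cong, use assms(1) ij in \<open>auto simp: isinvf_def\<close>)
  also have "\<dots> = mm n g' f' i j" by (rule mm_cong, simp, simp add: mm_dl_left)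
  also have "\<dots> = dl i j" using assms(2) ij by (simp add: isinvf_def)
  finally show "mm n (mm n g' g) (mm n f f') i j = dl i j" .
qed

lemma slocc_iff: "slocc_equiv a b c T S \<longleftrightarrow>
   (\<exists>f1 g1 f2 g2 f3 g3. isinvf a f1 g1 \<and> isinvf b f2 g2 \<and> isinvf c f3 g3 \<and> S = lopf a b c f1 f2 f3 T)"
proof
  assume "slocc_equiv a b c T S"
  then obtain L1 L2 L3 where L: "L1 \<in> carrier_mat a a" "invertible_mat L1" "L2 \<in> carrier_mat b b" "invertible_mat L2"
     "L3 \<in> carrier_mat c c" "invertible_mat L3" and S: "S = local_op a b c L1 L2 L3 T"
    unfolding slocc_equiv_def by blast
  obtain M1 M2 M3 where "isinvf a (ent L1) (ent M1)" "isinvf b (ent L2) (ent M2)" "isinvf c (ent L3) (ent M3)"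
    using inv_ex L by metis
  moreover have "S = lopf a b c (ent L1) (ent L2) (ent L3) T" using S by (simp add: local_op_lopf ent_def)
  ultimately show "\<exists>f1 g1 f2 g2 f3 g3. isinvf a f1 g1 \<and> isinvf b f2 g2 \<and> isinvf c f3 g3 \<and> S = lopf a b c f1 f2 f3 T"
    by blast
next
  assume "\<exists>f1 g1 f2 g2 f3 g3. isinvf a f1 g1 \<and> isinvf b f2 g2 \<and> isinvf c f3 g3 \<and> S = lopf a b c f1 f2 f3 T"
  then obtain f1 g1 f2 g2 f3 g3 where f: "isinvf a f1 g1" "isinvf b f2 g2" "isinvf c f3 g3" and S: "S = lopf a b c f1 f2 f3 T"
    by blast
  obtain L1 where L1: "L1 \<in> carrier_mat a a" "invertible_mat L1" "\<forall>i<a. \<forall>j<a. L1 $$ (i,j) = f1 i j" using isinvf_mat[OF f(1)] by blast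
  obtain L2 where L2: "L2 \<in> carrier_mat b b" "invertible_mat L2" "\<forall>i<b. \<forall>j<b. L2 $$ (i,j) = f2 i j" using isinvf_mat[OF f(2)] by blast
  obtain L3 where L3: "L3 \<in> carrier_mat c c" "invertible_mat L3" "\<forall>i<c. \<forall>j<c. L3 $$ (i,j) = f3 i j" using isinvf_mat[OF f(3)] by blast
  have "S = local_op a b c L1 L2 L3 T" unfolding S local_op_lopf
    by (rule lopf_cong) (use L1 L2 L3 in auto)
  then show "slocc_equiv a b c T S" unfolding slocc_equiv_def using L1 L2 L3 by blast
qed

lemma slocc_refl: "in_tensor3 a b c T \<Longrightarrow> slocc_equiv a b c T T"
  unfolding slocc_iff using isinvf_dl lopf_id by metis

lemma slocc_trans: assumes "slocc_equiv a b c T S" "slocc_equiv a b c S U" shows "slocc_equiv a b c T U"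
proof -
  obtain f1 g1 f2 g2 f3 g3 where f: "isinvf a f1 g1" "isinvf b f2 g2" "isinvf c f3 g3" and S: "S = lopf a b c f1 f2 f3 T"
    using assms(1) unfolding slocc_iff by blast
  obtain h1 k1 h2 k2 h3 k3 where h: "isinvf a h1 k1" "isinvf b h2 k2" "isinvf c h3 k3" and U: "U = lopf a b c h1 h2 h3 S"
    using assms(2) unfolding slocc_iff by blast
  have "U = lopf a b c (mm a h1 f1) (mm b h2 f2) (mm c h3 f3) T" unfolding U S lopf_comp ..
  then show ?thesis unfolding slocc_iff using isinvf_mm[OF h(1) f(1)] isinvf_mm[OF h(2) f(2)] isinvf_mm[OF h(3) f(3)] by blast
qed

lemma slocc_sym: assumes "slocc_equiv a b c T S" "in_tensor3 a b c T" shows "slocc_equiv a b c S T"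
proof -
  obtain f1 g1 f2 g2 f3 g3 where f: "isinvf a f1 g1" "isinvf b f2 g2" "isinvf c f3 g3" and S: "S = lopf a b c f1 f2 f3 T"
    using assms(1) unfolding slocc_iff by blast
  have "lopf a b c g1 g2 g3 S = lopf a b c (mm a g1 f1) (mm b g2 f2) (mm c g3 f3) T" unfolding S lopf_comp ..
  also have "\<dots> = lopf a b c dl dl dl T" by (rule lopf_cong) (use f in \<open>auto simp: isinvf_def\<close>)
  also have "\<dots> = T" by (rule lopf_id[OF assms(2)])
  finally show ?thesis unfolding slocc_iff using isinvf_sym[OF f(1)] isinvf_sym[OF f(2)] isinvf_sym[OF f(3)] by metis
qed

lemma gram_inv:
  assumes rk: "rank_rho_A1 d1 d2 d3 Phi = d1"
  shows "\<exists>Gi. isinvf d1 (\<lambda>i m. inner2 d2 d3 (Phi m) (Phi i)) Gi"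
proof -
  interpret V: vec_space "TYPE(complex)" d1 .
  define G where "G = reduced_A1 d1 d2 d3 Phi"
  have G: "G \<in> carrier_mat d1 d1" unfolding G_def reduced_A1_def by simp
  have "V.rank G = d1" using rk unfolding rank_rho_A1_def G_def .
  then have "det G \<noteq> 0" using V.det_rank_iff[OF G] by simp
  from det_non_zero_imp_unit[OF G this, of undefined]
  obtain Gi where Gi: "Gi \<in> carrier_mat d1 d1" "G * Gi = 1\<^sub>m d1"
    unfolding Units_def ring_mat_simps by auto
  have eG: "ent G i m = inner2 d2 d3 (Phi m) (Phi i)" if "i<d1" "m<d1" for i m
    using that unfolding ent_def G_def reduced_A1_def inner2_def by (simp add: mult.commute)
  have "isinvf d1 (\<lambda>i m. inner2 d2 d3 (Phi m) (Phi i)) (ent Gi)"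
  proof (rule right_inv_isinvf)
    fix i j assume ij: "i<d1" "j<d1"
    have "mm d1 (\<lambda>i m. inner2 d2 d3 (Phi m) (Phi i)) (ent Gi) i j = mm d1 (ent G) (ent Gi) i j"
      by (rule mm_cong) (use ij eG in auto)
    also have "\<dots> = (G * Gi) $$ (i,j)" using mult_ent[OF G Gi(1) ij] by simp
    also have "\<dots> = dl i j" using Gi(2) ij by (simp add: dl_def)
    finally show "mm d1 (\<lambda>i m. inner2 d2 d3 (Phi m) (Phi i)) (ent Gi) i j = dl i j" .
  qed
  then show ?thesis by blast
qed

lemma inner2_diff2: "inner2 b c u (\<lambda>j l. w j l - s j l) = inner2 b c u w - inner2 b c u s"
  unfolding inner2_def by (simp add: sum_subtractf right_diff_distrib)

lemma cnj_mult_self: "cnj z * z = complex_of_real ((cmod z)^2)"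
  using complex_norm_square[of z] by (simp add: mult.commute)

lemma inner2_self_zero: assumes "inner2 b c r r = 0" "j<b" "l<c" shows "r j l = 0"
proof -
  have "complex_of_real (\<Sum>j<b. \<Sum>l<c. (cmod (r j l))^2) = 0"
    using assms(1) unfolding inner2_def by (simp add: cnj_mult_self)
  then have 0: "(\<Sum>j<b. \<Sum>l<c. (cmod (r j l))^2) = 0" by (simp only: of_real_eq_0_iff)
  have "(\<Sum>l<c. (cmod (r j l))^2) = 0"
    using 0 assms(2) by (subst (asm) sum_nonneg_eq_0_iff) (auto intro: sum_nonneg)
  then have "(cmod (r j l))^2 = 0"
    using assms(3) by (subst (asm) sum_nonneg_eq_0_iff) auto
  then show ?thesis by simp
qed

lemma dbl_comp:
  assumes inv: "isinvf d1 (\<lambda>i m. inner2 b c (phi m) (phi i)) Gi"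
    and phi: "\<And>i. i<d1 \<Longrightarrow> in_tensor2 b c (phi i)"
    and w: "in_tensor2 b c w"
    and orth: "\<And>x. in_tensor2 b c x \<Longrightarrow> (\<forall>i<d1. inner2 b c (phi i) x = 0) \<Longrightarrow> inner2 b c x w = 0"
  shows "\<exists>co. \<forall>j l. w j l = (\<Sum>i<d1. co i * phi i j l)"
proof -
  define v where "v i' = inner2 b c (phi i') w" for i'
  define co where "co i = (\<Sum>i'<d1. v i' * Gi i' i)" for i
  define s where "s = (\<lambda>j l. \<Sum>i<d1. co i * phi i j l)"
  define r where "r = (\<lambda>j l. w j l - s j l)"
  have rin: "in_tensor2 b c r" using w phi unfolding r_def s_def in_tensor2_def by auto
  have rC: "inner2 b c (phi i'') r = 0" if i'': "i''<d1" for i''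
  proof -
    have "inner2 b c (phi i'') s = (\<Sum>i<d1. co i * inner2 b c (phi i'') (phi i))"
      unfolding s_def by (rule inner2_lin2)
    also have "\<dots> = (\<Sum>i<d1. \<Sum>i'<d1. v i' * (Gi i' i * inner2 b c (phi i'') (phi i)))"
      unfolding co_def by (simp add: sum_distrib_right mult.assoc)
    also have "\<dots> = (\<Sum>i'<d1. \<Sum>i<d1. v i' * (Gi i' i * inner2 b c (phi i'') (phi i)))"
      by (rule sum.swap)
    also have "\<dots> = (\<Sum>i'<d1. v i' * mm d1 Gi (\<lambda>i m. inner2 b c (phi m) (phi i)) i' i'')"
      unfolding mm_def by (simp add: sum_distrib_left)
    also have "\<dots> = (\<Sum>i'<d1. v i' * dl i' i'')"
      using inv i'' unfolding isinvf_def by (intro sum.cong) auto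
    also have "\<dots> = v i''" using i'' by (simp add: sum_dl')
    finally show ?thesis unfolding r_def inner2_diff2 v_def by simp
  qed
  have rw: "inner2 b c r w = 0" using orth[OF rin] rC by blast
  have rs: "inner2 b c r s = 0"
  proof -
    have "inner2 b c r s = (\<Sum>i<d1. co i * inner2 b c r (phi i))" unfolding s_def by (rule inner2_lin2)
    also have "\<dots> = 0"
      by (rule sum.neutral) (use rC in \<open>auto simp: inner2_cnj[of b c r]\<close>)
    finally show ?thesis .
  qed
  have rr: "inner2 b c r r = 0" unfolding r_def[of] inner2_diff2 using rw rs
    by (simp add: r_def[symmetric])
  show ?thesis
  proof (intro exI allI)
    fix j l
    show "w j l = (\<Sum>i<d1. co i * phi i j l)"
    proof (cases "j<b \<and> l<c")
      case True
      then have "r j l = 0" using inner2_self_zero[OF rr] by auto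
      then show ?thesis unfolding r_def s_def by simp
    next
      case False
      then show ?thesis using w phi unfolding in_tensor2_def by (auto intro!: sum.neutral)
    qed
  qed
qed

lemma indep_gram:
  assumes inv: "isinvf d1 (\<lambda>i m. \<Sum>p<N. cnj (phi m p) * phi i p) Gi"
    and z: "\<And>p. p<N \<Longrightarrow> (\<Sum>i<d1. co i * phi i p) = 0"
    and i': "i'<d1"
  shows "co i' = 0"
proof -
  define G where "G = (\<lambda>i m. \<Sum>p<N. cnj (phi m p) * phi i p)"
  have 1: "(\<Sum>i<d1. co i * G i m) = 0" for m
  proof -
    have "(\<Sum>i<d1. co i * G i m) = (\<Sum>i<d1. \<Sum>p<N. cnj (phi m p) * (co i * phi i p))"
      unfolding G_def by (simp add: sum_distrib_left mult.left_commute)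
    also have "\<dots> = (\<Sum>p<N. \<Sum>i<d1. cnj (phi m p) * (co i * phi i p))" by (rule sum.swap)
    also have "\<dots> = (\<Sum>p<N. cnj (phi m p) * (\<Sum>i<d1. co i * phi i p))" by (simp add: sum_distrib_left)
    also have "\<dots> = 0" using z by simp
    finally show ?thesis .
  qed
  have "co i' = (\<Sum>i<d1. co i * dl i i')" using i' by (simp add: sum_dl')
  also have "\<dots> = (\<Sum>i<d1. co i * mm d1 G Gi i i')"
    using inv i' unfolding isinvf_def G_def by (intro sum.cong) auto
  also have "\<dots> = (\<Sum>i<d1. \<Sum>m<d1. co i * (G i m * Gi m i'))"
    unfolding mm_def by (simp only: sum_distrib_left)
  also have "\<dots> = (\<Sum>m<d1. \<Sum>i<d1. co i * (G i m * Gi m i'))" by (rule sum.swap)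
  also have "\<dots> = (\<Sum>m<d1. (\<Sum>i<d1. co i * G i m) * Gi m i')" by (simp add: sum_distrib_right mult.assoc)
  also have "\<dots> = 0" using 1 by simp
  finally show ?thesis .
qed

lemma proj_gram:
  assumes inv: "isinvf d1 (\<lambda>i m. \<Sum>p<N. cnj (phi m p) * phi i p) Gi"
    and co: "co = (\<lambda>i. \<Sum>i'<d1. (\<Sum>p<N. cnj (phi i' p) * w p) * Gi i' i)"
    and i'': "i''<d1"
  shows "(\<Sum>p<N. cnj (phi i'' p) * (w p - (\<Sum>i<d1. co i * phi i p))) = 0"
proof -
  let ?G = "\<lambda>i m. \<Sum>p<N. cnj (phi m p) * phi i p"
  define v where "v i' = (\<Sum>p<N. cnj (phi i' p) * w p)" for i'
  have "(\<Sum>p<N. cnj (phi i'' p) * (\<Sum>i<d1. co i * phi i p)) = (\<Sum>p<N. \<Sum>i<d1. co i * (cnj (phi i'' p) * phi i p))"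
    by (simp add: sum_distrib_left mult.left_commute)
  also have "\<dots> = (\<Sum>i<d1. \<Sum>p<N. co i * (cnj (phi i'' p) * phi i p))" by (rule sum.swap)
  also have "\<dots> = (\<Sum>i<d1. co i * ?G i i'')" by (simp add: sum_distrib_left)
  also have "\<dots> = (\<Sum>i<d1. \<Sum>i'<d1. v i' * (Gi i' i * ?G i i''))"
    unfolding co v_def by (simp add: sum_distrib_right mult.assoc)
  also have "\<dots> = (\<Sum>i'<d1. \<Sum>i<d1. v i' * (Gi i' i * ?G i i''))" by (rule sum.swap)
  also have "\<dots> = (\<Sum>i'<d1. v i' * mm d1 Gi ?G i' i'')"
    unfolding mm_def by (simp add: sum_distrib_left)
  also have "\<dots> = (\<Sum>i'<d1. v i' * dl i' i'')"
    using inv i'' unfolding isinvf_def by (intro sum.cong) auto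
  also have "\<dots> = v i''" using i'' by (simp add: sum_dl')
  finally have "(\<Sum>p<N. cnj (phi i'' p) * (\<Sum>i<d1. co i * phi i p)) = v i''" .
  then show ?thesis unfolding v_def by (simp add: right_diff_distrib sum_subtractf)
qed

lemma flat_self_zero: fixes x :: "nat \<Rightarrow> complex" assumes "(\<Sum>p<N. cnj (x p) * x p) = 0" "p<N" shows "x p = 0"
proof -
  have "complex_of_real (\<Sum>p<N. (cmod (x p))^2) = 0"
    using assms(1) by (simp add: cnj_mult_self)
  then have "(\<Sum>p<N. (cmod (x p))^2) = 0" by (simp only: of_real_eq_0_iff)
  then have "(cmod (x p))^2 = 0"
    using assms(2) sum_nonneg_eq_0_iff[of "{..<N}" "\<lambda>p. (cmod (x p))^2"] by (simp del: norm_eq_zero)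
  then show ?thesis by simp
qed

lemma flat_dim:
  fixes N d1 :: nat and phi :: "nat \<Rightarrow> nat \<Rightarrow> complex"
  assumes inv: "isinvf d1 (\<lambda>i m. \<Sum>p<N. cnj (phi m p) * phi i p) Gi"
  shows "\<exists>x. (\<forall>i<N-d1. \<forall>i'<d1. (\<Sum>p<N. cnj (phi i' p) * x i p) = 0)
   \<and> (\<forall>co. (\<forall>p<N. (\<Sum>i<N-d1. co i * x i p) = 0) \<longrightarrow> (\<forall>i<N-d1. co i = 0))
   \<and> (\<forall>w. (\<forall>i'<d1. (\<Sum>p<N. cnj (phi i' p) * w p) = 0) \<longrightarrow> (\<exists>co. \<forall>p<N. w p = (\<Sum>i<N-d1. co i * x i p)))"
proof -
  interpret VS: vec_space "TYPE(complex)" N .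
  define vp where "vp i = vec N (phi i)" for i
  define ip where "ip u v = (\<Sum>p<N. cnj (u $ p) * v $ p)" for u v :: "complex vec"
  define C where "C = {v \<in> carrier_vec N. \<forall>i<d1. ip (vp i) v = 0}"
  define S0 where "S0 = vp ` {..<d1}"
  have vp_car: "vp i \<in> carrier_vec N" for i unfolding vp_def by simp
  have S0car: "S0 \<subseteq> carrier_vec N" unfolding S0_def using vp_car by auto
  have finS0: "finite S0" unfolding S0_def by simp
  have inj: "inj_on vp {..<d1}"
  proof (rule inj_onI)
    fix i i' assume i: "i \<in> {..<d1}" "i' \<in> {..<d1}" "vp i = vp i'"
    show "i = i'"
    proof (rule ccontr)
      assume ne: "i \<noteq> i'"
      define co where "co j = dl i j - dl i' j" for j
      have "(\<Sum>j<d1. co j * phi j p) = 0" if "p<N" for p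
      proof -
        have "phi i p = phi i' p" using i(3) that unfolding vp_def by (metis index_vec)
        then show ?thesis unfolding co_def using i by (simp add: left_diff_distrib sum_subtractf sum_dl)
      qed
      from indep_gram[OF inv this] i(1) have "co i = 0" by auto
      then show False unfolding co_def using ne by (simp add: dl_def)
    qed
  qed
  have lc_S0: "VS.lincomb a S0 $ p = (\<Sum>i<d1. a (vp i) * phi i p)" if "p<N" for a p
  proof -
    have "VS.lincomb a S0 $ p = (\<Sum>x\<in>S0. a x * x $ p)" by (rule VS.lincomb_index[OF that S0car])
    also have "\<dots> = (\<Sum>i<d1. a (vp i) * vp i $ p)" unfolding S0_def by (rule sum.reindex[OF inj, unfolded comp_def])
    also have "\<dots> = (\<Sum>i<d1. a (vp i) * phi i p)" using that unfolding vp_def by simp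
    finally show ?thesis .
  qed
  have S0_indep: "VS.lin_indpt S0"
  proof (rule VS.finite_lin_indpt2[OF finS0 S0car])
    fix a assume a0: "VS.lincomb a S0 = 0\<^sub>v N"
    have "(\<Sum>i<d1. a (vp i) * phi i p) = 0" if "p<N" for p using lc_S0[OF that, of a] a0 that by simp
    then have "a (vp i) = 0" if "i<d1" for i using indep_gram[OF inv, of "\<lambda>i. a (vp i)"] that by blast
    then show "\<forall>v\<in>S0. a v = 0" unfolding S0_def by auto
  qed
  have card_S0: "card S0 = d1" unfolding S0_def using card_image[OF inj] by simp
  have C_car: "C \<subseteq> carrier_vec N" unfolding C_def by auto
  have ip_lc: "ip u (VS.lincomb a A) = (\<Sum>x\<in>A. a x * ip u x)" if Acar: "A \<subseteq> carrier_vec N" for u a A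
  proof -
    have "ip u (VS.lincomb a A) = (\<Sum>p<N. cnj (u $ p) * (\<Sum>x\<in>A. a x * x $ p))"
      unfolding ip_def using VS.lincomb_index[OF _ Acar] by (intro sum.cong) auto
    also have "\<dots> = (\<Sum>p<N. \<Sum>x\<in>A. a x * (cnj (u $ p) * x $ p))"
      by (simp add: sum_distrib_left mult.left_commute)
    also have "\<dots> = (\<Sum>x\<in>A. \<Sum>p<N. a x * (cnj (u $ p) * x $ p))" by (rule sum.swap)
    also have "\<dots> = (\<Sum>x\<in>A. a x * ip u x)" unfolding ip_def by (simp add: sum_distrib_left)
    finally show ?thesis .
  qed
  have spanC: "VS.span B \<subseteq> C" if B: "B \<subseteq> C" for B
  proof
    fix y assume "y \<in> VS.span B"
    then obtain a A where y: "y = VS.lincomb a A" "finite A" "A \<subseteq> B" unfolding VS.span_def by auto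
    have Acar: "A \<subseteq> carrier_vec N" using y(3) B C_car by auto
    have ycar: "y \<in> carrier_vec N" using y(1) VS.lincomb_closed[OF Acar] by auto
    have "ip (vp i) y = 0" if i: "i<d1" for i
      unfolding y(1) ip_lc[OF Acar] using y(3) B i unfolding C_def by (intro sum.neutral) auto
    then show "y \<in> C" unfolding C_def using ycar by auto
  qed
  have indep_empty: "VS.lin_indpt {}" unfolding VS.lin_dep_def by auto
  define P where "P B \<longleftrightarrow> B \<subseteq> C \<and> VS.lin_indpt B" for B
  have P_bound: "card B < N + 1" if "P B" for B
  proof -
    have "B \<subseteq> carrier_vec N" "VS.lin_indpt B" using that C_car unfolding P_def by auto
    then have "card B \<le> N" using VS.li_le_dim(2)[OF VS.fin_dim] unfolding VS.dim_is_n by auto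
    then show ?thesis by simp
  qed
  obtain B where PB: "P B" and maxB: "\<And>B'. P B' \<Longrightarrow> card B' \<le> card B"
    using ex_has_greatest_nat[of P "{}" card "N+1"] P_bound indep_empty unfolding P_def by auto
  have BC: "B \<subseteq> C" and indB: "VS.lin_indpt B" using PB unfolding P_def by auto
  have Bcar: "B \<subseteq> carrier_vec N" using BC C_car by auto
  have finB: "finite B" using VS.li_le_dim(1)[OF VS.fin_dim Bcar indB] .
  have C_span: "C \<subseteq> VS.span B"
  proof
    fix c assume c: "c \<in> C"
    show "c \<in> VS.span B"
    proof (rule ccontr)
      assume nc: "c \<notin> VS.span B"
      have ccar: "c \<in> carrier_vec N" using c C_car by auto
      have cB: "c \<notin> B" using nc VS.in_own_span[OF Bcar] by auto
      have "VS.lin_indpt (B \<union> {c})" using VS.lin_dep_iff_in_span[OF Bcar indB ccar cB] nc by simp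
      then have "P (B \<union> {c})" unfolding P_def using BC c by auto
      from maxB[OF this] have "card (B \<union> {c}) \<le> card B" .
      then show False using cB finB by simp
    qed
  qed
  have disj: "B \<inter> S0 = {}"
  proof (rule ccontr)
    assume "B \<inter> S0 \<noteq> {}"
    then obtain i where i: "i<d1" "vp i \<in> B" unfolding S0_def by auto
    have "ip (vp i) (vp i) = 0" using i BC unfolding C_def by auto
    then have "vp i $ p = 0" if "p<N" for p
      using flat_self_zero[where N=N and x="\<lambda>p. vp i $ p", OF _ that] unfolding ip_def by simp
    then have "vp i = 0\<^sub>v N" by (intro eq_vecI) (auto simp: vp_def)
    then show False using VS.vs_zero_lin_dep[OF Bcar indB] i by simp
  qed
  have union_indep: "VS.lin_indpt (B \<union> S0)"
  proof (rule VS.finite_lin_indpt2)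
    show "finite (B \<union> S0)" using finB finS0 by simp
    show "B \<union> S0 \<subseteq> carrier_vec N" using Bcar S0car by simp
    fix a assume a0: "VS.lincomb a (B \<union> S0) = 0\<^sub>v N"
    define x where "x = VS.lincomb a B"
    define y where "y = VS.lincomb a S0"
    have xcar: "x \<in> carrier_vec N" unfolding x_def using VS.lincomb_closed[OF Bcar] by auto
    have ycar: "y \<in> carrier_vec N" unfolding y_def using VS.lincomb_closed[OF S0car] by auto
    have "VS.lincomb a (B \<union> S0) = x + y" unfolding x_def y_def
      by (rule VS.lincomb_union[OF Bcar S0car disj finB finS0]) auto
    then have xy: "x + y = 0\<^sub>v N" using a0 by simp
    have xC: "x \<in> C" unfolding x_def using spanC[OF BC] VS.span_def finB by blast
    have xp: "x $ p = - (y $ p)" if "p<N" for p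
      using arg_cong[OF xy, of "\<lambda>v. v $ p"] that xcar ycar by (simp add: eq_neg_iff_add_eq_0)
    have "ip x x = - (\<Sum>p<N. cnj (x $ p) * y $ p)" unfolding ip_def using xp
      by (simp add: sum_negf[symmetric])
    also have "(\<Sum>p<N. cnj (x $ p) * y $ p) = ip x y" unfolding ip_def ..
    also have "ip x y = (\<Sum>z\<in>S0. a z * ip x z)" unfolding y_def by (rule ip_lc[OF S0car])
    also have "\<dots> = 0"
    proof (rule sum.neutral, intro ballI)
      fix z assume "z \<in> S0"
      then obtain i where i: "i<d1" "z = vp i" unfolding S0_def by auto
      have "ip z x = 0" using xC i unfolding C_def by auto
      moreover have "ip x z = cnj (ip z x)" unfolding ip_def by (simp add: mult.commute)
      ultimately have "ip x z = 0" by simp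
      then show "a z * ip x z = 0" by simp
    qed
    finally have ixx: "ip x x = 0" by simp
    have "x $ p = 0" if "p<N" for p
      using flat_self_zero[where N=N and x="\<lambda>p. x $ p", OF _ that] ixx unfolding ip_def by simp
    then have x0: "x = 0\<^sub>v N" by (intro eq_vecI) (use xcar in auto)
    then have y0: "y = 0\<^sub>v N" using xy ycar by simp
    have "a \<in> B \<rightarrow> {0}" using VS.not_lindepD[OF indB finB subset_refl _ ] x0 unfolding x_def by auto
    moreover have "a \<in> S0 \<rightarrow> {0}" using VS.not_lindepD[OF S0_indep finS0 subset_refl _ ] y0 unfolding y_def by auto
    ultimately show "\<forall>v\<in>B \<union> S0. a v = 0" by auto
  qed
  have gen: "VS.span (B \<union> S0) = carrier_vec N"
  proof
    show "VS.span (B \<union> S0) \<subseteq> carrier_vec N" using VS.span_is_subset2[of "B \<union> S0"] Bcar S0car by simp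
    show "carrier_vec N \<subseteq> VS.span (B \<union> S0)"
    proof
      fix w :: "complex vec" assume w: "w \<in> carrier_vec N"
      define co where "co = (\<lambda>i. \<Sum>i'<d1. (\<Sum>p<N. cnj (phi i' p) * w $ p) * Gi i' i)"
      define a0 where "a0 v = co (the_inv_into {..<d1} vp v)" for v
      have a0vp: "a0 (vp i) = co i" if "i<d1" for i unfolding a0_def using the_inv_into_f_f[OF inj] that by simp
      define s where "s = VS.lincomb a0 S0"
      have scar: "s \<in> carrier_vec N" unfolding s_def using VS.lincomb_closed[OF S0car] by auto
      have s_ent: "s $ p = (\<Sum>i<d1. co i * phi i p)" if "p<N" for p
        unfolding s_def lc_S0[OF that] using a0vp by simp
      define c where "c = w - s"
      have ccar: "c \<in> carrier_vec N" unfolding c_def using w scar by simp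
      have "ip (vp i'') c = 0" if i'': "i''<d1" for i''
      proof -
        have "ip (vp i'') c = (\<Sum>p<N. cnj (phi i'' p) * (w $ p - (\<Sum>i<d1. co i * phi i p)))"
          unfolding ip_def c_def vp_def using w scar s_ent by (intro sum.cong) auto
        also have "\<dots> = 0" by (rule proj_gram[OF inv co_def i''])
        finally show ?thesis .
      qed
      then have "c \<in> C" unfolding C_def using ccar by auto
      then have "c \<in> VS.span B" using C_span by auto
      then obtain b where cb: "c = VS.lincomb b B" using VS.finite_span[OF finB Bcar] by auto
      have "w = c + s" unfolding c_def using w scar by auto
      also have "\<dots> = VS.lincomb (\<lambda>v. if v \<in> B then b v else a0 v) (B \<union> S0)"
        unfolding cb s_def by (rule VS.lincomb_union2) (use finB finS0 Bcar S0car disj in auto)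
      finally show "w \<in> VS.span (B \<union> S0)" unfolding VS.span_def using finB finS0 by blast
    qed
  qed
  have basis: "VS.basis (B \<union> S0)" unfolding VS.basis_def using union_indep gen Bcar S0car by auto
  have "N = card (B \<union> S0)" using VS.dim_basis[OF _ basis] finB finS0 VS.dim_is_n by simp
  also have "\<dots> = card B + d1" using card_Un_disjoint[OF finB finS0 disj] card_S0 by simp
  finally have cardB: "card B = N - d1" by simp
  obtain xs where xs: "set xs = B" "distinct xs" using finite_distinct_list[OF finB] by auto
  have len: "length xs = N - d1" using distinct_card[OF xs(2)] xs(1) cardB by simp
  have reB: "(\<Sum>v\<in>B. f v) = (\<Sum>i<N-d1. f (xs ! i))" for f :: "complex vec \<Rightarrow> complex"
  proof -
    have "B = nth xs ` {..<N-d1}" using xs(1) len by (auto simp: set_conv_nth)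
    moreover have "inj_on (nth xs) {..<N-d1}" using inj_on_nth[OF xs(2)] len by auto
    ultimately show ?thesis by (simp add: sum.reindex)
  qed
  have xsB: "xs ! i \<in> B" if "i < N-d1" for i using that xs(1) len by auto
  define x where "x i p = xs ! i $ p" for i p
  show ?thesis
  proof (intro exI[of _ x] conjI allI impI)
    fix i i' assume i: "i<N-d1" and i': "i'<d1"
    have "ip (vp i') (xs ! i) = 0" using xsB[OF i] BC i' unfolding C_def by auto
    then show "(\<Sum>p<N. cnj (phi i' p) * x i p) = 0" unfolding ip_def x_def vp_def by simp
  next
    fix co :: "nat \<Rightarrow> complex" and i
    assume z: "\<forall>p<N. (\<Sum>i<N-d1. co i * x i p) = 0" and i: "i<N-d1"
    define a where "a v = co (the_inv_into {..<N-d1} (nth xs) v)" for v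
    have injx: "inj_on (nth xs) {..<N-d1}" using inj_on_nth[OF xs(2)] len by auto
    have axs: "a (xs ! j) = co j" if "j<N-d1" for j unfolding a_def using the_inv_into_f_f[OF injx] that by simp
    have "VS.lincomb a B = 0\<^sub>v N"
    proof (rule eq_vecI)
      fix p assume "p < dim_vec (0\<^sub>v N :: complex vec)"
      then have p: "p<N" by simp
      have "VS.lincomb a B $ p = (\<Sum>v\<in>B. a v * v $ p)" by (rule VS.lincomb_index[OF p Bcar])
      also have "\<dots> = (\<Sum>j<N-d1. co j * x j p)" unfolding reB x_def using axs by simp
      also have "\<dots> = 0" using z p by simp
      finally show "VS.lincomb a B $ p = 0\<^sub>v N $ p" using p by simp
    qed (use VS.lincomb_closed[OF Bcar] in auto)
    then have aB: "a \<in> B \<rightarrow> {0}" using VS.not_lindepD[OF indB finB subset_refl] by auto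
    show "co i = 0" using funcset_mem[OF aB xsB[OF i]] axs[OF i] by simp
  next
    fix w :: "nat \<Rightarrow> complex" assume orth: "\<forall>i'<d1. (\<Sum>p<N. cnj (phi i' p) * w p) = 0"
    have "vec N w \<in> C" unfolding C_def ip_def vp_def using orth by auto
    then have "vec N w \<in> VS.span B" using C_span by auto
    then obtain b where wb: "vec N w = VS.lincomb b B" using VS.finite_span[OF finB Bcar] by auto
    show "\<exists>co. \<forall>p<N. w p = (\<Sum>i<N-d1. co i * x i p)"
    proof (intro exI allI impI)
      fix p assume p: "p<N"
      have "w p = vec N w $ p" using p by simp
      also have "\<dots> = (\<Sum>v\<in>B. b v * v $ p)" unfolding wb by (rule VS.lincomb_index[OF p Bcar])
      also have "\<dots> = (\<Sum>i<N-d1. b (xs ! i) * x i p)" unfolding reB x_def ..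
      finally show "w p = (\<Sum>i<N-d1. b (xs ! i) * x i p)" .
    qed
  qed
qed

lemma sum_flat: fixes b c :: nat assumes c: "0<c" shows "(\<Sum>p<b*c. f (p div c) (p mod c)) = (\<Sum>j<b. \<Sum>l<c. f j l)"
proof -
  have "(\<Sum>p<b*c. f (p div c) (p mod c)) = (\<Sum>j<b. \<Sum>p\<in>{j*c..<j*c+c}. f (p div c) (p mod c))"
    by (rule sum.nat_group[symmetric])
  also have "\<dots> = (\<Sum>j<b. \<Sum>l<c. f j l)"
  proof (rule sum.cong[OF refl])
    fix j
    have "(\<Sum>p\<in>{j*c..<j*c+c}. f (p div c) (p mod c)) = (\<Sum>l\<in>{0..<c}. f ((l+j*c) div c) ((l+j*c) mod c))"
      using sum.shift_bounds_nat_ivl[of "\<lambda>p. f (p div c) (p mod c)" 0 "j*c" c] by (simp add: add.commute)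
    also have "\<dots> = (\<Sum>l<c. f j l)" using c by (intro sum.cong) (auto simp: atLeast0LessThan)
    finally show "(\<Sum>p\<in>{j*c..<j*c+c}. f (p div c) (p mod c)) = (\<Sum>l<c. f j l)" .
  qed
  finally show ?thesis .
qed

lemma rep_exists:
  assumes d3: "0<d3" and Phi: "in_tensor3 d1 d2 d3 Phi"
    and inv: "isinvf d1 (\<lambda>i m. inner2 d2 d3 (Phi m) (Phi i)) Gi"
    and k: "k = d2*d3 - d1"
  shows "\<exists>X. T_rep d1 d2 d3 k Phi X"
proof -
  define N where "N = d2*d3"
  define phi where "phi i p = Phi i (p div d3) (p mod d3)" for i p
  have dm: "p div d3 < d2" "p mod d3 < d3" if "p<N" for p
    using that d3 unfolding N_def by (auto simp: less_mult_imp_div_less)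
  have gram: "(\<Sum>p<N. cnj (phi m p) * phi i p) = inner2 d2 d3 (Phi m) (Phi i)" for i m
    unfolding N_def phi_def inner2_def by (rule sum_flat[OF d3])
  have inv': "isinvf d1 (\<lambda>i m. \<Sum>p<N. cnj (phi m p) * phi i p) Gi" using inv unfolding gram .
  obtain x where x1: "\<forall>i<N-d1. \<forall>i'<d1. (\<Sum>p<N. cnj (phi i' p) * x i p) = 0"
    and x2: "\<forall>co. (\<forall>p<N. (\<Sum>i<N-d1. co i * x i p) = 0) \<longrightarrow> (\<forall>i<N-d1. co i = 0)"
    and x3: "\<forall>w. (\<forall>i'<d1. (\<Sum>p<N. cnj (phi i' p) * w p) = 0) \<longrightarrow> (\<exists>co. \<forall>p<N. w p = (\<Sum>i<N-d1. co i * x i p))"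
    using flat_dim[OF inv'] by blast
  have kN: "N - d1 = k" unfolding N_def k ..
  define X where "X i j l = (if i<k \<and> j<d2 \<and> l<d3 then x i (j*d3+l) else 0)" for i j l
  have Xp: "X i (p div d3) (p mod d3) = x i p" if "p<N" "i<k" for i p
    using that dm[OF that(1)] unfolding X_def by (simp add: mult.commute)
  have flat_inner: "inner2 d2 d3 (Phi i') w = (\<Sum>p<N. cnj (phi i' p) * w (p div d3) (p mod d3))" for i' w
    unfolding N_def phi_def inner2_def by (rule sum_flat[OF d3, symmetric])
  show ?thesis
  proof (intro exI)
    show "T_rep d1 d2 d3 k Phi X" unfolding T_rep_def
    proof (intro conjI allI impI)
      show "in_tensor3 k d2 d3 X" unfolding in_tensor3_def X_def by auto
    next
      fix i i' assume i: "i<k" and i': "i'<d1"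
      have "inner2 d2 d3 (Phi i') (X i) = (\<Sum>p<N. cnj (phi i' p) * x i p)"
        unfolding flat_inner using Xp i by (intro sum.cong) auto
      also have "\<dots> = 0" using x1[rule_format, of i i'] i i' kN by simp
      finally show "inner2 d2 d3 (Phi i') (X i) = 0" .
    next
      fix co :: "nat \<Rightarrow> complex" and i
      assume z: "\<forall>j<d2. \<forall>l<d3. (\<Sum>i<k. co i * X i j l) = 0" and i: "i<k"
      have "\<forall>p<N. (\<Sum>i<N-d1. co i * x i p) = 0"
      proof (intro allI impI)
        fix p assume p: "p<N"
        have "(\<Sum>i<N-d1. co i * x i p) = (\<Sum>i<k. co i * X i (p div d3) (p mod d3))"
          unfolding kN using Xp p by (intro sum.cong) auto
        also have "\<dots> = 0" using z dm[OF p] by auto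
        finally show "(\<Sum>i<N-d1. co i * x i p) = 0" .
      qed
      from mp[OF spec[OF x2, of co] this] i kN show "co i = 0" by simp
    next
      fix w assume w: "in_tensor2 d2 d3 w \<and> (\<forall>i'<d1. inner2 d2 d3 (Phi i') w = 0)"
      define wf where "wf p = w (p div d3) (p mod d3)" for p
      have "\<forall>i'<d1. (\<Sum>p<N. cnj (phi i' p) * wf p) = 0" using w unfolding flat_inner wf_def by auto
      from mp[OF spec[OF x3, of wf] this] obtain co where co: "\<forall>p<N. wf p = (\<Sum>i<N-d1. co i * x i p)" by blast
      show "\<exists>co. \<forall>j l. w j l = (\<Sum>i<k. co i * X i j l)"
      proof (intro exI allI)
        fix j l
        show "w j l = (\<Sum>i<k. co i * X i j l)"
        proof (cases "j<d2 \<and> l<d3")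
          case True
          define p where "p = j*d3+l"
          have "j*d3 + l < (j+1)*d3" using True by simp
          also have "(j+1)*d3 \<le> d2*d3" using True by (intro mult_le_mono1) simp
          finally have p: "p < N" unfolding p_def N_def .
          have pj: "p div d3 = j" "p mod d3 = l" unfolding p_def using True by auto
          have "w j l = wf p" unfolding wf_def pj ..
          also have "\<dots> = (\<Sum>i<k. co i * x i p)" using co p kN by auto
          also have "\<dots> = (\<Sum>i<k. co i * X i j l)" using Xp[OF p] pj by (intro sum.cong) auto
          finally show ?thesis .
        next
          case False
          then show ?thesis using w unfolding in_tensor2_def X_def by auto
        qed
      qed
    qed
  qed
qed

lemma adjf_adjf[simp]: "adjf (adjf f) = f" unfolding adjf_def by simp

lemma isinvf_mm_dl: "isinvf n f g \<Longrightarrow> i<n \<Longrightarrow> j<n \<Longrightarrow> mm n f g i j = dl i j"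
  unfolding isinvf_def by auto

lemma op2f_inv:
  assumes "isinvf b f2 g2" "isinvf c f3 g3" "in_tensor2 b c w"
  shows "op2f b c g2 g3 (op2f b c f2 f3 w) = w"
proof -
  have "op2f b c g2 g3 (op2f b c f2 f3 w) = op2f b c dl dl w"
    unfolding op2f_comp by (rule op2f_cong) (use assms in \<open>auto simp: isinvf_def\<close>)
  then show ?thesis using op2f_id[OF assms(3)] by simp
qed

lemma lopf_slice_fun: "i<a \<Longrightarrow> lopf a b c f1 f2 f3 T i = (\<lambda>j l. \<Sum>i'<a. f1 i i' * op2f b c f2 f3 (T i') j l)"
  by (intro ext) (rule lopf_slice)

lemma lopf_slice_dl: "i<a \<Longrightarrow> lopf a b c dl f2 f3 T i = op2f b c f2 f3 (T i)"
  by (intro ext) (simp add: lopf_slice sum_dl)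

lemma in3_slice: "in_tensor3 a b c T \<Longrightarrow> in_tensor2 b c (T i)"
  unfolding in_tensor3_def in_tensor2_def by auto

lemma incl:
  assumes sl: "slocc_equiv d1 d2 d3 Phi Psi"
  shows "T_A1 d1 d2 d3 k Phi \<subseteq> T_A1 d1 d2 d3 k Psi"
proof
  obtain f1 g1 f2 g2 f3 g3 where f: "isinvf d1 f1 g1" "isinvf d2 f2 g2" "isinvf d3 f3 g3"
    and Psi: "Psi = lopf d1 d2 d3 f1 f2 f3 Phi"
    using sl unfolding slocc_iff by blast
  fix Y assume "Y \<in> T_A1 d1 d2 d3 k Phi"
  then obtain X where X: "T_rep d1 d2 d3 k Phi X" and XY: "slocc_equiv k d2 d3 X Y"
    unfolding T_A1_def by blast
  have Xin: "in_tensor3 k d2 d3 X" using X unfolding T_rep_def by blast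
  have Xorth: "\<And>i i'. i<k \<Longrightarrow> i'<d1 \<Longrightarrow> inner2 d2 d3 (Phi i') (X i) = 0" using X unfolding T_rep_def by blast
  have Xind: "\<And>co. (\<forall>j<d2. \<forall>l<d3. (\<Sum>i<k. co i * X i j l) = 0) \<Longrightarrow> (\<forall>i<k. co i = 0)"
    using X unfolding T_rep_def by blast
  have Xspan: "\<And>w. in_tensor2 d2 d3 w \<Longrightarrow> (\<forall>i'<d1. inner2 d2 d3 (Phi i') w = 0) \<Longrightarrow>
          (\<exists>co. \<forall>j l. w j l = (\<Sum>i<k. co i * X i j l))"
    using X unfolding T_rep_def by blast
  define h2 where "h2 = adjf g2"
  define h3 where "h3 = adjf g3"
  have h2i: "isinvf d2 h2 (adjf f2)" unfolding h2_def by (rule isinvf_adj[OF f(2)])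
  have h3i: "isinvf d3 h3 (adjf f3)" unfolding h3_def by (rule isinvf_adj[OF f(3)])
  define X' where "X' = lopf k d2 d3 dl h2 h3 X"
  have X'sl: "X' i = op2f d2 d3 h2 h3 (X i)" if "i<k" for i unfolding X'_def using that by (rule lopf_slice_dl)
  have Psisl: "Psi i' = (\<lambda>j l. \<Sum>m<d1. f1 i' m * op2f d2 d3 f2 f3 (Phi m) j l)" if "i'<d1" for i'
    unfolding Psi using that by (rule lopf_slice_fun)
  have adj_cancel: "op2f d2 d3 (adjf f2) (adjf f3) (op2f d2 d3 h2 h3 v) = v" if "in_tensor2 d2 d3 v" for v
    by (rule op2f_inv[OF h2i h3i that])
  have adj_cancel2: "op2f d2 d3 h2 h3 (op2f d2 d3 (adjf f2) (adjf f3) v) = v" if "in_tensor2 d2 d3 v" for v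
    by (rule op2f_inv[OF isinvf_sym[OF h2i] isinvf_sym[OF h3i] that])
  have "T_rep d1 d2 d3 k Psi X'" unfolding T_rep_def
  proof (intro conjI allI impI)
    show "in_tensor3 k d2 d3 X'" unfolding X'_def by (rule lopf_in)
  next
    fix i i' assume i: "i<k" and i': "i'<d1"
    have "inner2 d2 d3 (Psi i') (X' i) = (\<Sum>m<d1. cnj (f1 i' m) * inner2 d2 d3 (op2f d2 d3 f2 f3 (Phi m)) (X' i))"
      unfolding Psisl[OF i'] by (rule inner2_lin1)
    also have "\<dots> = (\<Sum>m<d1. cnj (f1 i' m) * inner2 d2 d3 (Phi m) (X i))"
      unfolding inner2_adj X'sl[OF i] adj_cancel[OF in3_slice[OF Xin]] ..
    also have "\<dots> = 0" using Xorth[OF i] by simp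
    finally show "inner2 d2 d3 (Psi i') (X' i) = 0" .
  next
    fix co :: "nat \<Rightarrow> complex" and i
    assume z: "\<forall>j<d2. \<forall>l<d3. (\<Sum>i<k. co i * X' i j l) = 0" and i: "i<k"
    have z0: "(\<lambda>j l. \<Sum>i<k. co i * X' i j l) = (\<lambda>j l. 0)"
      using z lopf_in[of k d2 d3 dl h2 h3 X] unfolding X'_def[symmetric] in_tensor3_def
      by (intro ext) (metis (no_types, lifting) mult_zero_right sum.neutral)
    have "\<forall>j<d2. \<forall>l<d3. (\<Sum>i<k. co i * X i j l) = 0"
    proof (intro allI impI)
      fix j l assume jl: "j<d2" "l<d3"
      have "(\<Sum>i<k. co i * X i j l) = (\<Sum>i<k. co i * op2f d2 d3 (adjf f2) (adjf f3) (X' i) j l)"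
        using X'sl adj_cancel[OF in3_slice[OF Xin]] by (intro sum.cong) auto
      also have "\<dots> = op2f d2 d3 (adjf f2) (adjf f3) (\<lambda>j l. \<Sum>i<k. co i * X' i j l) j l"
        by (rule op2f_lin[symmetric])
      also have "\<dots> = 0" unfolding z0 op2f_def by simp
      finally show "(\<Sum>i<k. co i * X i j l) = 0" .
    qed
    then show "co i = 0" using Xind i by blast
  next
    fix w assume w: "in_tensor2 d2 d3 w \<and> (\<forall>i'<d1. inner2 d2 d3 (Psi i') w = 0)"
    define w' where "w' = op2f d2 d3 (adjf f2) (adjf f3) w"
    define v where "v m = inner2 d2 d3 (Phi m) w'" for m
    have vpsi: "(\<Sum>m<d1. cnj (f1 i' m) * v m) = 0" if i': "i'<d1" for i'
    proof -
      have "(\<Sum>m<d1. cnj (f1 i' m) * v m) = inner2 d2 d3 (Psi i') w"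
        unfolding Psisl[OF i'] inner2_lin1 v_def w'_def inner2_adj ..
      then show ?thesis using w i' by simp
    qed
    have v0: "v m = 0" if m: "m<d1" for m
    proof -
      have "v m = (\<Sum>m'<d1. dl m m' * v m')" using m by (simp add: sum_dl)
      also have "\<dots> = (\<Sum>m'<d1. cnj (mm d1 g1 f1 m m') * v m')"
        using f(1) m unfolding isinvf_def by (intro sum.cong) (auto simp: dl_def)
      also have "\<dots> = (\<Sum>m'<d1. \<Sum>i'<d1. cnj (g1 m i') * (cnj (f1 i' m') * v m'))"
        unfolding mm_def by (simp add: sum_distrib_right mult.assoc)
      also have "\<dots> = (\<Sum>i'<d1. \<Sum>m'<d1. cnj (g1 m i') * (cnj (f1 i' m') * v m'))" by (rule sum.swap)
      also have "\<dots> = (\<Sum>i'<d1. cnj (g1 m i') * (\<Sum>m'<d1. cnj (f1 i' m') * v m'))" by (simp add: sum_distrib_left)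
      also have "\<dots> = 0" using vpsi by simp
      finally show ?thesis .
    qed
    have "\<exists>co. \<forall>j l. w' j l = (\<Sum>i<k. co i * X i j l)"
      using Xspan[of w'] op2f_in v0 unfolding v_def w'_def by blast
    then obtain co where co: "\<forall>j l. w' j l = (\<Sum>i<k. co i * X i j l)" by blast
    have w'eq: "w' = (\<lambda>j l. \<Sum>i<k. co i * X i j l)" using co by (intro ext) auto
    show "\<exists>co. \<forall>j l. w j l = (\<Sum>i<k. co i * X' i j l)"
    proof (intro exI allI)
      fix j l
      have "w j l = op2f d2 d3 h2 h3 w' j l" unfolding w'_def adj_cancel2[OF conjunct1[OF w]] ..
      also have "\<dots> = (\<Sum>i<k. co i * op2f d2 d3 h2 h3 (X i) j l)" unfolding w'eq by (rule op2f_lin)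
      also have "\<dots> = (\<Sum>i<k. co i * X' i j l)" using X'sl by (intro sum.cong) auto
      finally show "w j l = (\<Sum>i<k. co i * X' i j l)" .
    qed
  qed
  moreover have "slocc_equiv k d2 d3 X' X"
  proof -
    have "lopf k d2 d3 dl (adjf f2) (adjf f3) X' = lopf k d2 d3 (mm k dl dl) (mm d2 (adjf f2) h2) (mm d3 (adjf f3) h3) X"
      unfolding X'_def lopf_comp ..
    also have "\<dots> = lopf k d2 d3 dl dl dl X"
      by (rule lopf_cong) (use h2i h3i in \<open>auto simp: mm_dl_left isinvf_def\<close>)
    also have "\<dots> = X" by (rule lopf_id[OF Xin])
    finally show ?thesis unfolding slocc_iff using isinvf_dl isinvf_sym[OF h2i] isinvf_sym[OF h3i] by metis
  qed
  then have "slocc_equiv k d2 d3 X' Y" using XY by (rule slocc_trans)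
  ultimately show "Y \<in> T_A1 d1 d2 d3 k Psi" unfolding T_A1_def by blast
qed

lemma recover:
  assumes eq: "T_A1 d1 d2 d3 k Phi = T_A1 d1 d2 d3 k Psi"
    and PhiX: "T_rep d1 d2 d3 k Phi X"
    and Phi: "in_tensor3 d1 d2 d3 Phi" and Psi: "in_tensor3 d1 d2 d3 Psi"
    and invPhi: "isinvf d1 (\<lambda>i m. inner2 d2 d3 (Phi m) (Phi i)) GiPhi"
    and invPsi: "isinvf d1 (\<lambda>i m. inner2 d2 d3 (Psi m) (Psi i)) GiPsi"
  shows "slocc_equiv d1 d2 d3 Phi Psi"
proof -
  have Xin: "in_tensor3 k d2 d3 X" using PhiX unfolding T_rep_def by blast
  have Xspan: "\<And>w. in_tensor2 d2 d3 w \<Longrightarrow> (\<forall>i'<d1. inner2 d2 d3 (Phi i') w = 0) \<Longrightarrow>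
          (\<exists>co. \<forall>j l. w j l = (\<Sum>i<k. co i * X i j l))"
    using PhiX unfolding T_rep_def by blast
  have "X \<in> T_A1 d1 d2 d3 k Phi" unfolding T_A1_def using PhiX slocc_refl[OF Xin] by blast
  then have "X \<in> T_A1 d1 d2 d3 k Psi" using eq by simp
  then obtain X' where X': "T_rep d1 d2 d3 k Psi X'" and X'X: "slocc_equiv k d2 d3 X' X"
    unfolding T_A1_def by blast
  have X'orth: "\<And>i i'. i<k \<Longrightarrow> i'<d1 \<Longrightarrow> inner2 d2 d3 (Psi i') (X' i) = 0" using X' unfolding T_rep_def by blast
  obtain M1 M1i M2 M2i M3 M3i where M: "isinvf k M1 M1i" "isinvf d2 M2 M2i" "isinvf d3 M3 M3i"
    and X: "X = lopf k d2 d3 M1 M2 M3 X'"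
    using X'X unfolding slocc_iff by blast
  define N2 where "N2 = adjf M2i"
  define N3 where "N3 = adjf M3i"
  have N2i: "isinvf d2 N2 (adjf M2)" unfolding N2_def by (rule isinvf_adj[OF M(2)])
  have N3i: "isinvf d3 N3 (adjf M3)" unfolding N3_def by (rule isinvf_adj[OF M(3)])
  define psi where "psi m = op2f d2 d3 N2 N3 (Psi m)" for m
  have Xsl: "X i = (\<lambda>j l. \<Sum>i'<k. M1 i i' * op2f d2 d3 M2 M3 (X' i') j l)" if "i<k" for i
    unfolding X using that by (rule lopf_slice_fun)
  have c1: "inner2 d2 d3 (X i) (psi m) = 0" if i: "i<k" and m: "m<d1" for i m
  proof -
    have "inner2 d2 d3 (X i) (psi m) = (\<Sum>i'<k. cnj (M1 i i') * inner2 d2 d3 (op2f d2 d3 M2 M3 (X' i')) (psi m))"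
      unfolding Xsl[OF i] by (rule inner2_lin1)
    also have "\<dots> = (\<Sum>i'<k. cnj (M1 i i') * inner2 d2 d3 (X' i') (Psi m))"
    proof (intro sum.cong refl)
      fix i' 
      have "op2f d2 d3 (adjf M2) (adjf M3) (psi m) = Psi m"
        unfolding psi_def by (rule op2f_inv[OF N2i N3i in3_slice[OF Psi]])
      then show "cnj (M1 i i') * inner2 d2 d3 (op2f d2 d3 M2 M3 (X' i')) (psi m) = cnj (M1 i i') * inner2 d2 d3 (X' i') (Psi m)"
        unfolding inner2_adj by simp
    qed
    also have "\<dots> = 0" using X'orth m by (intro sum.neutral) (auto simp: inner2_cnj[of d2 d3 "X' _"])
    finally show ?thesis .
  qed
  have c2: "inner2 d2 d3 x (psi m) = 0" if x: "in_tensor2 d2 d3 x" "\<forall>i<d1. inner2 d2 d3 (Phi i) x = 0" and m: "m<d1" for x m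
  proof -
    obtain co where co: "\<forall>j l. x j l = (\<Sum>i<k. co i * X i j l)" using Xspan[OF x] by blast
    have "x = (\<lambda>j l. \<Sum>i<k. co i * X i j l)" using co by (intro ext) auto
    then have "inner2 d2 d3 x (psi m) = (\<Sum>i<k. cnj (co i) * inner2 d2 d3 (X i) (psi m))"
      by (simp add: inner2_lin1)
    also have "\<dots> = 0" using c1 m by simp
    finally show ?thesis .
  qed
  have "\<forall>m. \<exists>co. m<d1 \<longrightarrow> (\<forall>j l. psi m j l = (\<Sum>i<d1. co i * Phi i j l))"
  proof (intro allI)
    fix m
    show "\<exists>co. m<d1 \<longrightarrow> (\<forall>j l. psi m j l = (\<Sum>i<d1. co i * Phi i j l))"
    proof (cases "m<d1")
      case True
      have "\<exists>co. \<forall>j l. psi m j l = (\<Sum>i<d1. co i * Phi i j l)"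
        by (rule dbl_comp[OF invPhi in3_slice[OF Phi]]) (use c2 True in \<open>auto simp: psi_def op2f_in\<close>)
      then show ?thesis by blast
    qed auto
  qed
  then obtain C where C: "\<And>m j l. m<d1 \<Longrightarrow> psi m j l = (\<Sum>i<d1. C m i * Phi i j l)"
    by metis
  define Psi2 where "Psi2 = lopf d1 d2 d3 dl N2 N3 Psi"
  have Psi2sl: "Psi2 m = psi m" if "m<d1" for m unfolding Psi2_def psi_def using that by (rule lopf_slice_dl)
  have Psi2C: "Psi2 = lopf d1 d2 d3 C dl dl Phi"
  proof (intro ext)
    fix i j l
    show "Psi2 i j l = lopf d1 d2 d3 C dl dl Phi i j l"
    proof (cases "i<d1 \<and> j<d2 \<and> l<d3")
      case True
      have "Psi2 i j l = (\<Sum>i'<d1. C i i' * Phi i' j l)" using Psi2sl C True by simp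
      also have "\<dots> = lopf d1 d2 d3 C dl dl Phi i j l"
        unfolding lopf_slice[OF conjunct1[OF True]] op2f_id[OF in3_slice[OF Phi]] ..
      finally show ?thesis .
    next
      case False
      then show ?thesis unfolding Psi2_def lopf_def by auto
    qed
  qed
  have PsiPsi2: "Psi = lopf d1 d2 d3 dl (adjf M2) (adjf M3) Psi2"
  proof -
    have "lopf d1 d2 d3 dl (adjf M2) (adjf M3) Psi2 = lopf d1 d2 d3 (mm d1 dl dl) (mm d2 (adjf M2) N2) (mm d3 (adjf M3) N3) Psi"
      unfolding Psi2_def lopf_comp ..
    also have "\<dots> = lopf d1 d2 d3 dl dl dl Psi"
      by (rule lopf_cong) (use N2i N3i in \<open>auto simp: mm_dl_left isinvf_def\<close>)
    also have "\<dots> = Psi" by (rule lopf_id[OF Psi])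
    finally show ?thesis by simp
  qed
  have PsiC: "Psi = lopf d1 d2 d3 C (adjf M2) (adjf M3) Phi"
  proof -
    have "Psi = lopf d1 d2 d3 (mm d1 dl C) (mm d2 (adjf M2) dl) (mm d3 (adjf M3) dl) Phi"
      unfolding PsiPsi2 Psi2C lopf_comp ..
    also have "\<dots> = lopf d1 d2 d3 C (adjf M2) (adjf M3) Phi"
      by (rule lopf_cong) (auto simp: mm_dl_left mm_dl_right)
    finally show ?thesis .
  qed
  define R where "R i' = (\<lambda>j l. \<Sum>m<d1. cnj (GiPsi m i') * Psi m j l)" for i'
  define S where "S m i' = inner2 d2 d3 (op2f d2 d3 M2 M3 (R i')) (Phi m)" for m i'
  have "isinvf d1 C S"
  proof (rule right_inv_isinvf)
    fix i i' assume i: "i<d1" and i': "i'<d1"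
    have "inner2 d2 d3 (R i') (Psi i) = (\<Sum>m<d1. GiPsi m i' * inner2 d2 d3 (Psi m) (Psi i))"
      unfolding R_def inner2_lin1 by simp
    also have "\<dots> = mm d1 (\<lambda>i m. inner2 d2 d3 (Psi m) (Psi i)) GiPsi i i'"
      unfolding mm_def by (simp add: mult.commute)
    also have "\<dots> = dl i i'" using invPsi i i' unfolding isinvf_def by auto
    finally have 1: "inner2 d2 d3 (R i') (Psi i) = dl i i'" .
    have Psii: "Psi i = op2f d2 d3 (adjf M2) (adjf M3) (psi i)"
      using lopf_slice_dl[OF i, of d2 d3 "adjf M2" "adjf M3" Psi2] PsiPsi2 Psi2sl[OF i] by simp
    have psii: "psi i = (\<lambda>j l. \<Sum>m<d1. C i m * Phi m j l)" using C[OF i] by (intro ext) simp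
    have "inner2 d2 d3 (R i') (Psi i) = cnj (inner2 d2 d3 (op2f d2 d3 (adjf M2) (adjf M3) (psi i)) (R i'))"
      unfolding Psii by (rule inner2_cnj)
    also have "\<dots> = cnj (inner2 d2 d3 (psi i) (op2f d2 d3 M2 M3 (R i')))"
      unfolding inner2_adj by simp
    also have "\<dots> = inner2 d2 d3 (op2f d2 d3 M2 M3 (R i')) (psi i)"
      by (simp add: inner2_cnj[of d2 d3 "psi i"])
    also have "\<dots> = (\<Sum>m<d1. C i m * S m i')"
      unfolding psii inner2_lin2 S_def ..
    finally show "mm d1 C S i i' = dl i i'" using 1 unfolding mm_def by simp
  qed
  then show ?thesis unfolding slocc_iff
    using PsiC isinvf_adj[OF isinvf_sym[OF M(2)]] isinvf_adj[OF isinvf_sym[OF M(3)]] by blast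
qed

theorem mainTheorem9:
  fixes d1 d2 d3 k :: nat and Phi Psi :: tensor3
  assumes "d2 \<ge> 2" and "d3 \<ge> 2" and "k \<ge> 1"
    and "d1 = d2 * d3 - k" and "d1 \<ge> 1"
    and "in_tensor3 d1 d2 d3 Phi" and "in_tensor3 d1 d2 d3 Psi"
    and "rank_rho_A1 d1 d2 d3 Phi = d1" and "rank_rho_A1 d1 d2 d3 Psi = d1"
  shows "slocc_equiv d1 d2 d3 Phi Psi \<longleftrightarrow> T_A1 d1 d2 d3 k Phi = T_A1 d1 d2 d3 k Psi"
proof -
  obtain GiPhi where gPhi: "isinvf d1 (\<lambda>i m. inner2 d2 d3 (Phi m) (Phi i)) GiPhi"
    using gram_inv[OF assms(8)] by blast
  obtain GiPsi where gPsi: "isinvf d1 (\<lambda>i m. inner2 d2 d3 (Psi m) (Psi i)) GiPsi"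
    using gram_inv[OF assms(9)] by blast
  have kk: "k = d2*d3 - d1" using assms(4) assms(5) by simp
  have d3: "0 < d3" using assms(2) by simp
  show ?thesis
  proof
    assume sl: "slocc_equiv d1 d2 d3 Phi Psi"
    have sl': "slocc_equiv d1 d2 d3 Psi Phi" by (rule slocc_sym[OF sl assms(6)])
    show "T_A1 d1 d2 d3 k Phi = T_A1 d1 d2 d3 k Psi"
      using incl[OF sl] incl[OF sl'] by blast
  next
    assume eq: "T_A1 d1 d2 d3 k Phi = T_A1 d1 d2 d3 k Psi"
    obtain X where X: "T_rep d1 d2 d3 k Phi X" using rep_exists[OF d3 assms(6) gPhi kk] by blast
    show "slocc_equiv d1 d2 d3 Phi Psi" by (rule recover[OF eq X assms(6,7) gPhi gPsi])
  qed
qed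

end
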